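(* Let $L=L(f,0)$ be a $3\mathbb Z$-periodic Leibniz algebra over a field $K$ with structure matrix $(\alpha_{ij})_{i,j\in\{0,1,2\}}$. Then $L$ is right nilpotent if and only if $\alpha_{i0}=0$ for $i=0,1,2$, $\alpha_{01}\alpha_{11}\alpha_{21}=\alpha_{02}\alpha_{12}\alpha_{22}=0$, and $\alpha_{01}\alpha_{12}=\alpha_{11}\alpha_{22}=\alpha_{21}\alpha_{02}=0$.
   Context: $L(f,0)$ is the $K$-algebra with basis $\{e_a:a\in\mathbb Z\}$ and multiplication $e_ae_b=f(a,b)e_{a+b}$; it is $3\mathbb Z$-periodic with structure matrix $(\alpha_{ij})$ if $f(a,b)=\alpha_{a\bmod 3,\,b\bmod 3}$; it is Leibniz if $x(yz)=(xy)z-(xz)y$ for all $x,y,z$. An algebra is right nilpotent if there is $N$ with $(\cdots((x_1x_2)x_3)\cdots)x_N=0$ for all $x_1,\dots,x_N$. *)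

theory Defs
  imports Main
begin

text \<open>Elements of L(f,0): finitely supported coefficient functions on the basis (e_a), a in Z.\<close>
definition fsupp :: "(int \<Rightarrow> 'k::zero) set" where
  "fsupp = {x. finite {a. x a \<noteq> 0}}"

text \<open>Bilinear extension of e_a e_b = f(a,b) e_(a+b).\<close>
definition amul :: "(int \<Rightarrow> int \<Rightarrow> 'k::field) \<Rightarrow> (int \<Rightarrow> 'k) \<Rightarrow> (int \<Rightarrow> 'k) \<Rightarrow> (int \<Rightarrow> 'k)" where
  "amul f x y = (\<lambda>c. \<Sum>a\<in>{a. x a \<noteq> 0}. x a * y (c - a) * f a (c - a))"

definition periodic3 :: "(nat \<Rightarrow> nat \<Rightarrow> 'k) \<Rightarrow> int \<Rightarrow> int \<Rightarrow> 'k" where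
  "periodic3 \<alpha> a b = \<alpha> (nat (a mod 3)) (nat (b mod 3))"

definition is_leibniz :: "(int \<Rightarrow> int \<Rightarrow> 'k::field) \<Rightarrow> bool" where
  "is_leibniz f \<longleftrightarrow> (\<forall>x\<in>fsupp. \<forall>y\<in>fsupp. \<forall>z\<in>fsupp.
      amul f x (amul f y z) = amul f (amul f x y) z - amul f (amul f x z) y)"

fun lnprod :: "(int \<Rightarrow> int \<Rightarrow> 'k::field) \<Rightarrow> (int \<Rightarrow> 'k) list \<Rightarrow> (int \<Rightarrow> 'k)" where
  "lnprod f [] = (\<lambda>_. 0)"
| "lnprod f (x # xs) = foldl (amul f) x xs"

definition right_nilpotent :: "(int \<Rightarrow> int \<Rightarrow> 'k::field) \<Rightarrow> bool" where
  "right_nilpotent f \<longleftrightarrow> (\<exists>N\<ge>1. \<forall>xs. length xs = N \<and> set xs \<subseteq> fsupp \<longrightarrow> lnprod f xs = (\<lambda>_. 0))"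

end

theory Submission
  imports Defs
begin

lemma amul_nz:
  assumes "amul f x y c \<noteq> 0"
  shows "\<exists>a. x a \<noteq> 0 \<and> y (c - a) \<noteq> 0 \<and> f a (c - a) \<noteq> 0"
proof -
  from assms have "(\<Sum>a\<in>{a. x a \<noteq> 0}. x a * y (c - a) * f a (c - a)) \<noteq> 0"
    by (simp add: amul_def)
  then obtain a where "a \<in> {a. x a \<noteq> 0}" "x a * y (c - a) * f a (c - a) \<noteq> 0"
    using sum.not_neutral_contains_not_neutral by blast
  then show ?thesis by auto
qed

lemma nat_mod3_add: "nat ((a + b) mod 3) = (nat (a mod 3) + nat (b mod 3)) mod 3"
  for a b :: int
proof -
  have "(a + b) mod 3 = (a mod 3 + b mod 3) mod 3" by (simp add: mod_add_eq)
  moreover have "a mod 3 \<ge> 0" "b mod 3 \<ge> 0" by auto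
  ultimately show ?thesis by (simp add: nat_mod_distrib nat_add_distrib)
qed

lemma mod3_cases: "nat (a mod 3) \<in> {0,1,2}" for a :: int
proof -
  have "a mod 3 \<in> {0,1,2}" by auto
  then show ?thesis by auto
qed

lemma key_nat:
  fixes \<alpha> :: "nat \<Rightarrow> nat \<Rightarrow> 'k::field"
  assumes C: "(\<forall>i\<in>{0,1,2}. \<alpha> i 0 = 0) \<and>
     \<alpha> 0 1 * \<alpha> 1 1 * \<alpha> 2 1 = 0 \<and> \<alpha> 0 2 * \<alpha> 1 2 * \<alpha> 2 2 = 0 \<and>
     \<alpha> 0 1 * \<alpha> 1 2 = 0 \<and> \<alpha> 1 1 * \<alpha> 2 2 = 0 \<and> \<alpha> 2 1 * \<alpha> 0 2 = 0"
  and "i \<in> {0,1,2}" "j \<in> {0,1,2}" "k \<in> {0,1,2}" "l \<in> {0,1,2}"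
  shows "\<alpha> i j = 0 \<or> \<alpha> ((i + j) mod 3) k = 0 \<or> \<alpha> ((i + j + k) mod 3) l = 0"
proof -
  have D: "\<alpha> 0 0 = 0" "\<alpha> 1 0 = 0" "\<alpha> 2 0 = 0"
    "\<alpha> 0 1 = 0 \<or> \<alpha> 1 1 = 0 \<or> \<alpha> 2 1 = 0" "\<alpha> 0 2 = 0 \<or> \<alpha> 1 2 = 0 \<or> \<alpha> 2 2 = 0"
    "\<alpha> 0 1 = 0 \<or> \<alpha> 1 2 = 0" "\<alpha> 1 1 = 0 \<or> \<alpha> 2 2 = 0" "\<alpha> 2 1 = 0 \<or> \<alpha> 0 2 = 0"
    using C by auto
  from assms(2-5) show ?thesis
    apply (elim insertE emptyE)
    apply (simp_all add: numeral_2_eq_2 D(1-3)[unfolded numeral_2_eq_2 One_nat_def])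
    using D(4-8)[unfolded numeral_2_eq_2 One_nat_def] by blast+
qed

lemma key_int:
  fixes \<alpha> :: "nat \<Rightarrow> nat \<Rightarrow> 'k::field"
  assumes C: "(\<forall>i\<in>{0,1,2}. \<alpha> i 0 = 0) \<and>
     \<alpha> 0 1 * \<alpha> 1 1 * \<alpha> 2 1 = 0 \<and> \<alpha> 0 2 * \<alpha> 1 2 * \<alpha> 2 2 = 0 \<and>
     \<alpha> 0 1 * \<alpha> 1 2 = 0 \<and> \<alpha> 1 1 * \<alpha> 2 2 = 0 \<and> \<alpha> 2 1 * \<alpha> 0 2 = 0"
  shows "periodic3 \<alpha> a b = 0 \<or> periodic3 \<alpha> (a + b) c = 0 \<or> periodic3 \<alpha> (a + b + c) d = 0"
proof -
  have "\<alpha> (nat (a mod 3)) (nat (b mod 3)) = 0 \<or>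
        \<alpha> ((nat (a mod 3) + nat (b mod 3)) mod 3) (nat (c mod 3)) = 0 \<or>
        \<alpha> ((nat (a mod 3) + nat (b mod 3) + nat (c mod 3)) mod 3) (nat (d mod 3)) = 0"
    by (rule key_nat[OF C mod3_cases mod3_cases mod3_cases mod3_cases])
  moreover have e1: "nat ((a + b) mod 3) = (nat (a mod 3) + nat (b mod 3)) mod 3"
    by (rule nat_mod3_add)
  moreover have "nat ((a + b + c) mod 3) = (nat ((a + b) mod 3) + nat (c mod 3)) mod 3"
    by (rule nat_mod3_add)
  then have "nat ((a + b + c) mod 3) = (nat (a mod 3) + nat (b mod 3) + nat (c mod 3)) mod 3"
    unfolding e1 by (simp only: mod_add_left_eq)
  ultimately show ?thesis unfolding periodic3_def by metis
qed

definition ev :: "'k::field \<Rightarrow> int \<Rightarrow> int \<Rightarrow> 'k" where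
  "ev k a = (\<lambda>c. if c = a then k else 0)"

lemma ev_fsupp: "ev k a \<in> fsupp"
proof -
  have "{c. ev k a c \<noteq> 0} \<subseteq> {a}" by (auto simp: ev_def)
  then show ?thesis unfolding fsupp_def using finite_subset by auto
qed

lemma amul_ev: "amul f (ev k a) (ev 1 b) = ev (k * f a b) (a + b)"
proof (cases "k = 0")
  case True
  then show ?thesis by (auto simp: amul_def ev_def fun_eq_iff)
next
  case False
  then have "{a'. ev k a a' \<noteq> 0} = {a}" by (auto simp: ev_def)
  then show ?thesis by (auto simp: amul_def ev_def fun_eq_iff)
qed

lemma walk:
  assumes "\<And>n. s (Suc n) = s n + r n"
  shows "foldl (amul f) (ev 1 (s 0)) (map (\<lambda>i. ev 1 (r i)) [0..<n])
         = ev (\<Prod>i<n. f (s i) (r i)) (s n)"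
proof (induction n)
  case 0
  then show ?case by simp
next
  case (Suc n)
  then show ?case by (simp add: amul_ev assms mult.commute)
qed

lemma not_rn:
  assumes "\<And>n. s (Suc n) = s n + r n" "\<And>n. f (s n) (r n) \<noteq> 0"
  shows "\<not> right_nilpotent f"
proof
  assume "right_nilpotent f"
  then obtain N where N: "N \<ge> 1" "\<forall>xs. length xs = N \<and> set xs \<subseteq> fsupp \<longrightarrow> lnprod f xs = (\<lambda>_. 0)"
    unfolding right_nilpotent_def by blast
  let ?xs = "ev 1 (s 0) # map (\<lambda>i. ev 1 (r i)) [0..<N-1]"
  have "length ?xs = N" using N by simp
  moreover have "set ?xs \<subseteq> fsupp" using ev_fsupp by auto
  ultimately have "lnprod f ?xs = (\<lambda>_. 0)" using N by blast
  then have "ev (\<Prod>i<N-1. f (s i) (r i)) (s (N-1)) = (\<lambda>_. 0)"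
    using walk[of s r f "N-1", OF assms(1)] by simp
  then have "ev (\<Prod>i<N-1. f (s i) (r i)) (s (N-1)) (s (N-1)) = 0" by simp
  then have "(\<Prod>i<N-1. f (s i) (r i)) = 0" by (simp add: ev_def)
  moreover have "(\<Prod>i<N-1. f (s i) (r i)) \<noteq> 0" using assms(2) by simp
  ultimately show False by simp
qed

lemma alt_step: "int (3 * (Suc n div 2) + Suc n mod 2) = int (3 * (n div 2) + n mod 2) + (1 + int (n mod 2))"
  by (cases "even n") (auto elim: evenE oddE)

lemma alt_mod: "(c + int (3 * (n div 2) + n mod 2)) mod 3 = (c + int (n mod 2)) mod 3"
proof -
  have "c + int (3 * (n div 2) + n mod 2) = (c + int (n mod 2)) + 3 * int (n div 2)" by simp
  then show ?thesis by (metis mod_mult_self2)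
qed

theorem corollary4p8:
  fixes \<alpha> :: "nat \<Rightarrow> nat \<Rightarrow> 'k::field"
  assumes "is_leibniz (periodic3 \<alpha>)"
  shows "right_nilpotent (periodic3 \<alpha>) \<longleftrightarrow>
    ((\<forall>i\<in>{0,1,2}. \<alpha> i 0 = 0) \<and>
     \<alpha> 0 1 * \<alpha> 1 1 * \<alpha> 2 1 = 0 \<and> \<alpha> 0 2 * \<alpha> 1 2 * \<alpha> 2 2 = 0 \<and>
     \<alpha> 0 1 * \<alpha> 1 2 = 0 \<and> \<alpha> 1 1 * \<alpha> 2 2 = 0 \<and> \<alpha> 2 1 * \<alpha> 0 2 = 0)"
  (is "?R \<longleftrightarrow> ?C")
proof
  assume C: ?C
  let ?f = "periodic3 \<alpha>"
  have "\<forall>xs. length xs = 4 \<and> set xs \<subseteq> fsupp \<longrightarrow> lnprod ?f xs = (\<lambda>_. 0)"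
  proof (intro allI impI)
    fix xs :: "(int \<Rightarrow> 'k) list"
    assume "length xs = 4 \<and> set xs \<subseteq> fsupp"
    then obtain x1 x2 x3 x4 where xs: "xs = [x1,x2,x3,x4]"
      by (auto simp: numeral_eq_Suc length_Suc_conv)
    show "lnprod ?f xs = (\<lambda>_. 0)"
    proof
      fix c
      show "lnprod ?f xs c = 0"
      proof (rule ccontr)
        assume "lnprod ?f xs c \<noteq> 0"
        then have "amul ?f (amul ?f (amul ?f x1 x2) x3) x4 c \<noteq> 0" by (simp add: xs)
        then obtain a3 where a3: "amul ?f (amul ?f x1 x2) x3 a3 \<noteq> 0" "?f a3 (c - a3) \<noteq> 0"
          using amul_nz by blast
        then obtain a2 where a2: "amul ?f x1 x2 a2 \<noteq> 0" "?f a2 (a3 - a2) \<noteq> 0"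
          using amul_nz by blast
        then obtain a1 where a1: "?f a1 (a2 - a1) \<noteq> 0"
          using amul_nz by blast
        have "?f a1 (a2 - a1) = 0 \<or> ?f (a1 + (a2 - a1)) (a3 - a2) = 0 \<or>
              ?f (a1 + (a2 - a1) + (a3 - a2)) (c - a3) = 0"
          by (rule key_int[OF C])
        then show False using a1 a2 a3 by simp
      qed
    qed
  qed
  then show ?R unfolding right_nilpotent_def by (intro exI[of _ 4]) auto
next
  assume R: ?R
  let ?f = "periodic3 \<alpha>"
  have p: "?f a b = \<alpha> (nat (a mod 3)) (nat (b mod 3))" for a b by (simp add: periodic3_def)
  have c0: "\<alpha> i 0 = 0" if "i \<in> {0,1,2}" for i
  proof (rule ccontr)
    assume nz: "\<alpha> i 0 \<noteq> 0"
    have "\<not> ?R"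
      by (rule not_rn[of "\<lambda>n. int i" "\<lambda>n. 0"]) (use that nz in \<open>auto simp: p\<close>)
    then show False using R by simp
  qed
  have c1: "\<alpha> 0 1 * \<alpha> 1 1 * \<alpha> 2 1 = 0"
  proof (rule ccontr)
    assume nz: "\<alpha> 0 1 * \<alpha> 1 1 * \<alpha> 2 1 \<noteq> 0"
    have "\<not> ?R"
    proof (rule not_rn[of "\<lambda>n. int n" "\<lambda>n. 1"])
      fix n
      have "nat (int n mod 3) \<in> {0,1,2}" by (rule mod3_cases)
      then show "?f (int n) 1 \<noteq> 0" using nz by (auto simp: p)
    qed auto
    then show False using R by simp
  qed
  have c2: "\<alpha> 0 2 * \<alpha> 1 2 * \<alpha> 2 2 = 0"
  proof (rule ccontr)
    assume nz: "\<alpha> 0 2 * \<alpha> 1 2 * \<alpha> 2 2 \<noteq> 0"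
    have "\<not> ?R"
    proof (rule not_rn[of "\<lambda>n. 2 * int n" "\<lambda>n. 2"])
      fix n
      have "nat ((2 * int n) mod 3) \<in> {0,1,2}" by (rule mod3_cases)
      then show "?f (2 * int n) 2 \<noteq> 0" using nz by (auto simp: p)
    qed auto
    then show False using R by simp
  qed
  have alt: "\<alpha> (nat c) 1 * \<alpha> (nat ((c + 1) mod 3)) 2 = 0" if "c \<in> {0,1,2}" for c :: int
  proof (rule ccontr)
    assume nz: "\<alpha> (nat c) 1 * \<alpha> (nat ((c + 1) mod 3)) 2 \<noteq> 0"
    have "\<not> ?R"
    proof (rule not_rn[of "\<lambda>n. c + int (3 * (n div 2) + n mod 2)" "\<lambda>n. 1 + int (n mod 2)"])
      fix n
      show "c + int (3 * (Suc n div 2) + Suc n mod 2) =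
            c + int (3 * (n div 2) + n mod 2) + (1 + int (n mod 2))"
        using alt_step[of n] by simp
      have nz1: "\<alpha> (nat c) 1 \<noteq> 0" and nz2: "\<alpha> (nat ((c + 1) mod 3)) 2 \<noteq> 0"
        using nz by auto
      have cm: "c mod 3 = c" using that by auto
      have m: "(c + int (3 * (n div 2) + n mod 2)) mod 3 = (c + int (n mod 2)) mod 3"
        by (rule alt_mod)
      show "?f (c + int (3 * (n div 2) + n mod 2)) (1 + int (n mod 2)) \<noteq> 0"
      proof (cases "even n")
        case True
        then have "n mod 2 = 0" by simp
        then show ?thesis unfolding p m using nz1 cm by simp
      next
        case False
        then have "n mod 2 = 1" by presburger
        then show ?thesis unfolding p m using nz2 by simp
      qed
    qed
    then show False using R by simp
  qed
  have "\<alpha> 0 1 * \<alpha> 1 2 = 0" using alt[of 0] by simp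
  moreover have "\<alpha> 1 1 * \<alpha> 2 2 = 0" using alt[of 1] by simp
  moreover have "\<alpha> 2 1 * \<alpha> 0 2 = 0" using alt[of 2] by simp
  ultimately show ?C using c0 c1 c2 by blast
qed

end
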